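(* Let $X$ be a compact Hausdorff space, $\mathcal C=C(X)$ with the supremum norm, $\alpha\colon X\to X$ continuous, $\delta f=f\circ\alpha$, and $A$ a transfer operator for $(\mathcal C,\delta)$. Then for every $\varphi\in\mathcal C$ and every $\mu\in M_\delta(\mathcal C)$, \[ \lambda(\varphi)\ge \mu[\varphi]+\tau(\mu). \]
   Context: A transfer operator for $(\mathcal C,\delta)$ is a positive linear operator $A\colon\mathcal C\to\mathcal C$ with $A((\delta f)g)=f\,Ag$ for all $f,g\in\mathcal C$. $A_\varphi f=A(e^\varphi f)$ and $\lambda(\varphi)=\lim_{n\to\infty}\frac1n\ln\|A_\varphi^n\mathbf 1\|$ ($\mathbf 1$ the constant function $1$). $M(\mathcal C)$ is the set of positive linear functionals $m$ on $\mathcal C$ with $m[\mathbf 1]=1$; $M_\delta(\mathcal C)$ those with additionally $\mu[\delta f]=\mu[f]$ for all $f$. A partition of unity is a finite set $D$ of nonnegative elements of $\mathcal C$ summing to $\mathbf 1$. For $\mu\in M_\delta(\mathcal C)$: $\tau_n(\mu,D)=\sup_{m\in M(\mathcal C)}\sum_{g\in D}\mu[g]\ln\frac{m[A^ng]}{\mu[g]}$, $\tau_n(\mu)=\inf_D\tau_n(\mu,D)$ over all partitions of unity, $\tau(\mu)=\inf_{n\in\mathbb N}\tau_n(\mu)/n$; summands with $\mu[g]=0$ are set to $0$, $\ln0=-\infty$, and if some $g\in D$ has $A^ng=0$ and $\mu[g]>0$ then $\tau(\mu)=-\infty$. *)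

theory Defs
  imports "HOL-Analysis.Analysis"
begin

text \<open>The space X is a (nonempty) compact Hausdorff topological space, modelled as a type
 'a of class t2_space with UNIV compact. C(X) is the set of continuous real functions.\<close>

definition CX :: "('a::topological_space \<Rightarrow> real) set" where
  "CX = {f. continuous_on UNIV f}"

definition sup_norm :: "('a \<Rightarrow> real) \<Rightarrow> real" where
  "sup_norm f = (SUP x. \<bar>f x\<bar>)"

definition one_fun :: "'a \<Rightarrow> real" where
  "one_fun = (\<lambda>_. 1)"

definition pos_lin_op :: "(('a::topological_space \<Rightarrow> real) \<Rightarrow> ('a \<Rightarrow> real)) \<Rightarrow> bool" where
  "pos_lin_op A \<longleftrightarrow>
     (\<forall>f\<in>CX. A f \<in> CX) \<and>
     (\<forall>f\<in>CX. \<forall>g\<in>CX. A (\<lambda>x. f x + g x) = (\<lambda>x. A f x + A g x)) \<and>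
     (\<forall>f\<in>CX. \<forall>c::real. A (\<lambda>x. c * f x) = (\<lambda>x. c * A f x)) \<and>
     (\<forall>f\<in>CX. (\<forall>x. f x \<ge> 0) \<longrightarrow> (\<forall>x. A f x \<ge> 0))"

definition transfer_op :: "('a::topological_space \<Rightarrow> 'a) \<Rightarrow> (('a \<Rightarrow> real) \<Rightarrow> ('a \<Rightarrow> real)) \<Rightarrow> bool" where
  "transfer_op \<alpha> A \<longleftrightarrow> pos_lin_op A \<and>
     (\<forall>f\<in>CX. \<forall>g\<in>CX. A (\<lambda>x. f (\<alpha> x) * g x) = (\<lambda>x. f x * A g x))"

definition A_phi :: "(('a \<Rightarrow> real) \<Rightarrow> ('a \<Rightarrow> real)) \<Rightarrow> ('a \<Rightarrow> real) \<Rightarrow> ('a \<Rightarrow> real) \<Rightarrow> ('a \<Rightarrow> real)" where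
  "A_phi A \<phi> f = A (\<lambda>x. exp (\<phi> x) * f x)"

definition lnE :: "real \<Rightarrow> ereal" where
  "lnE x = (if x > 0 then ereal (ln x) else -\<infinity>)"

definition press :: "(('a \<Rightarrow> real) \<Rightarrow> ('a \<Rightarrow> real)) \<Rightarrow> ('a \<Rightarrow> real) \<Rightarrow> ereal" where
  "press A \<phi> = lim (\<lambda>n. lnE (sup_norm ((A_phi A \<phi> ^^ n) one_fun)) / ereal (real n))"

definition states :: "(('a::topological_space \<Rightarrow> real) \<Rightarrow> real) set" where
  "states = {m. (\<forall>f\<in>CX. \<forall>g\<in>CX. m (\<lambda>x. f x + g x) = m f + m g) \<and>
               (\<forall>f\<in>CX. \<forall>c::real. m (\<lambda>x. c * f x) = c * m f) \<and>
               (\<forall>f\<in>CX. (\<forall>x. f x \<ge> 0) \<longrightarrow> m f \<ge> 0) \<and>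
               m one_fun = 1}"

definition inv_states :: "('a::topological_space \<Rightarrow> 'a) \<Rightarrow> (('a \<Rightarrow> real) \<Rightarrow> real) set" where
  "inv_states \<alpha> = {\<mu>\<in>states. \<forall>f\<in>CX. \<mu> (\<lambda>x. f (\<alpha> x)) = \<mu> f}"

definition partitions_of_unity :: "('a::topological_space \<Rightarrow> real) set set" where
  "partitions_of_unity = {D. finite D \<and> D \<subseteq> CX \<and> (\<forall>g\<in>D. \<forall>x. g x \<ge> 0) \<and>
                              (\<forall>x. (\<Sum>g\<in>D. g x) = 1)}"

definition tau_nD :: "(('a::topological_space \<Rightarrow> real) \<Rightarrow> ('a \<Rightarrow> real)) \<Rightarrow> nat \<Rightarrow> (('a \<Rightarrow> real) \<Rightarrow> real)
     \<Rightarrow> ('a \<Rightarrow> real) set \<Rightarrow> ereal" where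
  "tau_nD A n \<mu> D = (SUP m\<in>states. \<Sum>g\<in>D.
       (if \<mu> g = 0 then 0 else ereal (\<mu> g) * lnE (m ((A ^^ n) g) / \<mu> g)))"

definition tau_n :: "(('a::topological_space \<Rightarrow> real) \<Rightarrow> ('a \<Rightarrow> real)) \<Rightarrow> nat \<Rightarrow> (('a \<Rightarrow> real) \<Rightarrow> real) \<Rightarrow> ereal" where
  "tau_n A n \<mu> = (INF D\<in>partitions_of_unity. tau_nD A n \<mu> D)"

definition tau :: "(('a::topological_space \<Rightarrow> real) \<Rightarrow> ('a \<Rightarrow> real)) \<Rightarrow> (('a \<Rightarrow> real) \<Rightarrow> real) \<Rightarrow> ereal" where
  "tau A \<mu> = (INF n\<in>{1..}. tau_n A n \<mu> / ereal (real n))"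

end

theory Submission
  imports Defs
begin


lemma CX_iff: "f \<in> CX \<longleftrightarrow> continuous_on UNIV f" by (simp add: CX_def)

lemma CX_const[simp]: "(\<lambda>x. c) \<in> CX" by (simp add: CX_def)
lemma CX_one[simp]: "one_fun \<in> CX" by (simp add: CX_def one_fun_def)
lemma CX_add: "f \<in> CX \<Longrightarrow> g \<in> CX \<Longrightarrow> (\<lambda>x. f x + g x) \<in> CX"
  by (auto simp: CX_def intro!: continuous_intros)
lemma CX_mult: "f \<in> CX \<Longrightarrow> g \<in> CX \<Longrightarrow> (\<lambda>x. f x * g x) \<in> CX"
  by (auto simp: CX_def intro!: continuous_intros)
lemma CX_cmult: "f \<in> CX \<Longrightarrow> (\<lambda>x. c * f x) \<in> CX"
  by (auto simp: CX_def intro!: continuous_intros)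
lemma CX_exp: "f \<in> CX \<Longrightarrow> (\<lambda>x. exp (f x)) \<in> CX"
  by (auto simp: CX_def intro!: continuous_intros)
lemma CX_sum: "finite D \<Longrightarrow> (\<And>g. g \<in> D \<Longrightarrow> F g \<in> CX) \<Longrightarrow> (\<lambda>x. \<Sum>g\<in>D. F g x) \<in> CX"
  by (auto simp: CX_def intro!: continuous_intros)
lemma CX_comp: "f \<in> CX \<Longrightarrow> continuous_on UNIV \<alpha> \<Longrightarrow> (\<lambda>x. f (\<alpha> x)) \<in> CX"
  unfolding CX_def using continuous_on_compose[of UNIV \<alpha> f]
  by (auto simp: o_def intro: continuous_on_subset)

definition plf :: "(('a::topological_space \<Rightarrow> real) \<Rightarrow> real) \<Rightarrow> bool" where
  "plf \<psi> \<longleftrightarrow> (\<forall>f\<in>CX. \<forall>g\<in>CX. \<psi> (\<lambda>x. f x + g x) = \<psi> f + \<psi> g) \<and>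
     (\<forall>f\<in>CX. \<forall>c::real. \<psi> (\<lambda>x. c * f x) = c * \<psi> f) \<and>
     (\<forall>f\<in>CX. (\<forall>x. f x \<ge> 0) \<longrightarrow> \<psi> f \<ge> 0)"

lemma plf_add: "plf \<psi> \<Longrightarrow> f \<in> CX \<Longrightarrow> g \<in> CX \<Longrightarrow> \<psi> (\<lambda>x. f x + g x) = \<psi> f + \<psi> g"
  by (simp add: plf_def)
lemma plf_cmult: "plf \<psi> \<Longrightarrow> f \<in> CX \<Longrightarrow> \<psi> (\<lambda>x. c * f x) = c * \<psi> f"
  by (simp add: plf_def)
lemma plf_pos: "plf \<psi> \<Longrightarrow> f \<in> CX \<Longrightarrow> (\<And>x. f x \<ge> 0) \<Longrightarrow> \<psi> f \<ge> 0"
  by (simp add: plf_def)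
lemma plf_zero: "plf \<psi> \<Longrightarrow> \<psi> (\<lambda>x. 0) = 0"
  using plf_cmult[of \<psi> "\<lambda>x. 0" 0] by simp
lemma plf_sum: assumes "plf \<psi>" "finite D" "\<And>g. g \<in> D \<Longrightarrow> F g \<in> CX"
  shows "\<psi> (\<lambda>x. \<Sum>g\<in>D. F g x) = (\<Sum>g\<in>D. \<psi> (F g))"
  using assms(2,3)
proof (induction D rule: finite_induct)
  case empty then show ?case using plf_zero[OF assms(1)] by simp
next
  case (insert a D)
  have "\<psi> (\<lambda>x. \<Sum>g\<in>insert a D. F g x) = \<psi> (\<lambda>x. F a x + (\<Sum>g\<in>D. F g x))"
    using insert by simp
  also have "\<dots> = \<psi> (F a) + \<psi> (\<lambda>x. \<Sum>g\<in>D. F g x)"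
    using insert by (intro plf_add[OF assms(1)]) (auto intro!: CX_sum)
  finally show ?case using insert by simp
qed
lemma plf_diff: assumes "plf \<psi>" "f \<in> CX" "g \<in> CX" shows "\<psi> (\<lambda>x. g x - f x) = \<psi> g - \<psi> f"
proof -
  have "(\<lambda>x. g x - f x) = (\<lambda>x. g x + (\<lambda>x. (-1) * f x) x)" by simp
  then have "\<psi> (\<lambda>x. g x - f x) = \<psi> g + \<psi> (\<lambda>x. (-1) * f x)"
    using plf_add[OF assms(1,3) CX_cmult[OF assms(2), of "-1"]] by simp
  also have "\<psi> (\<lambda>x. (-1) * f x) = - \<psi> f" using plf_cmult[OF assms(1,2), of "-1"] by simp
  finally show ?thesis by simp
qed
lemma plf_mono: assumes "plf \<psi>" "f \<in> CX" "g \<in> CX" "\<And>x. f x \<le> g x" shows "\<psi> f \<le> \<psi> g"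
proof -
  have "\<psi> (\<lambda>x. g x - f x) \<ge> 0"
    using assms(2-4) by (intro plf_pos[OF assms(1)]) (auto simp: CX_def intro!: continuous_intros)
  moreover have "\<psi> (\<lambda>x. g x - f x) = \<psi> g - \<psi> f" by (rule plf_diff[OF assms(1-3)])
  ultimately show ?thesis by linarith
qed

lemma states_plf: "m \<in> states \<Longrightarrow> plf m" by (simp add: states_def plf_def)
lemma states_one: "m \<in> states \<Longrightarrow> m one_fun = 1" by (simp add: states_def)

lemma plo_CX: "pos_lin_op B \<Longrightarrow> f \<in> CX \<Longrightarrow> B f \<in> CX" by (simp add: pos_lin_op_def)
lemma plo_add: "pos_lin_op B \<Longrightarrow> f \<in> CX \<Longrightarrow> g \<in> CX \<Longrightarrow> B (\<lambda>x. f x + g x) = (\<lambda>x. B f x + B g x)"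
  by (simp add: pos_lin_op_def)
lemma plo_cmult: "pos_lin_op B \<Longrightarrow> f \<in> CX \<Longrightarrow> B (\<lambda>x. c * f x) = (\<lambda>x. c * B f x)"
  by (simp add: pos_lin_op_def)
lemma plo_pos: "pos_lin_op B \<Longrightarrow> f \<in> CX \<Longrightarrow> (\<And>x. f x \<ge> 0) \<Longrightarrow> B f x \<ge> 0"
  by (simp add: pos_lin_op_def)

lemma plo_comp_plf: "pos_lin_op B \<Longrightarrow> plf \<psi> \<Longrightarrow> plf (\<lambda>f. \<psi> (B f))"
  unfolding plf_def by (auto simp: plo_add plo_cmult plo_CX plo_pos)

lemma plo_eval_plf: "pos_lin_op B \<Longrightarrow> plf (\<lambda>f. B f x)"
  unfolding plf_def by (auto simp: plo_add plo_cmult plo_CX plo_pos)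

lemma plo_funpow: assumes "pos_lin_op B" shows "pos_lin_op (B ^^ n)"
proof (induction n)
  case 0 then show ?case by (simp add: pos_lin_op_def)
next
  case (Suc n)
  show ?case using Suc assms unfolding pos_lin_op_def
    by (auto simp: plo_add plo_cmult plo_CX plo_pos)
qed

lemma plo_mono: "pos_lin_op B \<Longrightarrow> f \<in> CX \<Longrightarrow> g \<in> CX \<Longrightarrow> (\<And>x. f x \<le> g x) \<Longrightarrow> B f x \<le> B g x"
  using plf_mono[OF plo_eval_plf] by blast

lemma plo_sum: "pos_lin_op B \<Longrightarrow> finite D \<Longrightarrow> (\<And>g. g \<in> D \<Longrightarrow> F g \<in> CX) \<Longrightarrow>
   B (\<lambda>x. \<Sum>g\<in>D. F g x) x = (\<Sum>g\<in>D. B (F g) x)"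
  using plf_sum[OF plo_eval_plf] by blast


lemma CX_bdd: assumes "compact (UNIV::'a::topological_space set)" "f \<in> CX"
  shows "bdd_above (range (\<lambda>x::'a. \<bar>f x\<bar>))"
proof -
  have "continuous_on UNIV (\<lambda>x. \<bar>f x\<bar>)" using assms(2) by (auto simp: CX_def intro!: continuous_intros)
  then have "compact (range (\<lambda>x. \<bar>f x\<bar>))" using assms(1) by (rule compact_continuous_image)
  then show ?thesis by (intro bounded_imp_bdd_above compact_imp_bounded)
qed
lemma sup_norm_ge: assumes "compact (UNIV::'a::topological_space set)" "f \<in> CX"
  shows "\<bar>f (x::'a)\<bar> \<le> sup_norm f"
  unfolding sup_norm_def by (rule cSUP_upper[OF UNIV_I CX_bdd[OF assms]])

lemma sup_norm_ge': assumes "compact (UNIV::'a::topological_space set)" "f \<in> CX"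
  shows "f (x::'a) \<le> sup_norm f"
  using sup_norm_ge[OF assms, of x] by linarith

lemma sup_norm_nonneg: assumes "compact (UNIV::'a::topological_space set)" "f \<in> CX"
  shows "0 \<le> sup_norm (f :: 'a \<Rightarrow> real)"
  using sup_norm_ge[OF assms, of undefined] by linarith

lemma sup_norm_le: "(\<And>x. \<bar>f x\<bar> \<le> c) \<Longrightarrow> sup_norm f \<le> c"
  unfolding sup_norm_def by (rule cSUP_least) auto

lemma state_le_sup: assumes "compact (UNIV::'a::topological_space set)" "f \<in> CX" "m \<in> states"
  shows "m (f :: 'a \<Rightarrow> real) \<le> sup_norm f"
proof -
  have "m f \<le> m (\<lambda>x. sup_norm f * one_fun x)"
  proof (rule plf_mono[OF states_plf[OF assms(3)] assms(2)])
    show "(\<lambda>x. sup_norm f * one_fun x) \<in> CX" by (rule CX_cmult[OF CX_one])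
    show "f x \<le> sup_norm f * one_fun x" for x using sup_norm_ge'[OF assms(1,2)] by (simp add: one_fun_def)
  qed
  also have "\<dots> = sup_norm f" using assms(3) by (simp add: plf_cmult[OF states_plf] states_one)
  finally show ?thesis .
qed

lemma transfer_plo: "transfer_op \<alpha> A \<Longrightarrow> pos_lin_op A" by (simp add: transfer_op_def)

lemma transfer_iter:
  assumes "transfer_op \<alpha> A" "continuous_on UNIV \<alpha>" "h \<in> CX"
  shows "u \<in> CX \<Longrightarrow> (A^^n) (\<lambda>y. u ((\<alpha>^^n) y) * h y) = (\<lambda>x. u x * (A^^n) h x)"
proof (induction n arbitrary: u)
  case 0 then show ?case by simp
next
  case (Suc n)
  have uc: "(\<lambda>x. u (\<alpha> x)) \<in> CX" using Suc.prems assms(2) by (rule CX_comp)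
  have "(A^^Suc n) (\<lambda>y. u ((\<alpha>^^Suc n) y) * h y) = A ((A^^n) (\<lambda>y. (\<lambda>x. u (\<alpha> x)) ((\<alpha>^^n) y) * h y))"
    by simp
  also have "\<dots> = A (\<lambda>x. u (\<alpha> x) * (A^^n) h x)" using Suc.IH[OF uc] by simp
  also have "\<dots> = (\<lambda>x. u x * A ((A^^n) h) x)"
    using assms(1) Suc.prems plo_CX[OF plo_funpow[OF transfer_plo[OF assms(1)]] assms(3)]
    unfolding transfer_op_def by blast
  finally show ?case by simp
qed

lemma Aphi_plo: assumes "pos_lin_op A" "\<phi> \<in> CX" shows "pos_lin_op (A_phi A \<phi>)"
proof -
  have e: "(\<lambda>x. exp (\<phi> x)) \<in> CX" using assms(2) by (rule CX_exp)
  have 1: "A_phi A \<phi> f \<in> CX" if "f \<in> CX" for f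
    unfolding A_phi_def using that e by (intro plo_CX[OF assms(1)] CX_mult)
  have 2: "A_phi A \<phi> (\<lambda>x. f x + g x) = (\<lambda>x. A_phi A \<phi> f x + A_phi A \<phi> g x)" if "f \<in> CX" "g \<in> CX" for f g
  proof -
    have "(\<lambda>x. exp (\<phi> x) * (f x + g x)) = (\<lambda>x. (\<lambda>x. exp (\<phi> x) * f x) x + (\<lambda>x. exp (\<phi> x) * g x) x)"
      by (simp add: distrib_left)
    then show ?thesis unfolding A_phi_def using that e by (simp add: plo_add[OF assms(1)] CX_mult)
  qed
  have 3: "A_phi A \<phi> (\<lambda>x. c * f x) = (\<lambda>x. c * A_phi A \<phi> f x)" if "f \<in> CX" for f c
  proof -
    have "(\<lambda>x. exp (\<phi> x) * (c * f x)) = (\<lambda>x. c * (\<lambda>x. exp (\<phi> x) * f x) x)"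
      by (simp add: algebra_simps)
    then show ?thesis unfolding A_phi_def using that e by (simp add: plo_cmult[OF assms(1)] CX_mult)
  qed
  have 4: "A_phi A \<phi> f x \<ge> 0" if "f \<in> CX" "\<forall>x. f x \<ge> 0" for f x
    unfolding A_phi_def using that e by (intro plo_pos[OF assms(1)] CX_mult) auto
  show ?thesis using 1 2 3 4 unfolding pos_lin_op_def by blast
qed

definition Sn :: "('a \<Rightarrow> 'a) \<Rightarrow> ('a \<Rightarrow> real) \<Rightarrow> nat \<Rightarrow> 'a \<Rightarrow> real" where
  "Sn \<alpha> \<phi> n = (\<lambda>x. \<Sum>k<n. \<phi> ((\<alpha>^^k) x))"

lemma funpow_cont: fixes \<alpha> :: "'a::topological_space \<Rightarrow> 'a"
  shows "continuous_on UNIV \<alpha> \<Longrightarrow> continuous_on UNIV (\<alpha>^^n)"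
proof (induction n)
  case 0
  have "(\<alpha>^^0) = (\<lambda>x. x)" by (rule ext) simp
  then show ?case by (simp add: continuous_on_id)
next
  case (Suc n)
  have "continuous_on UNIV (\<alpha> \<circ> (\<alpha>^^n))"
    using continuous_on_compose[OF Suc.IH[OF Suc.prems] continuous_on_subset[OF Suc.prems subset_UNIV]] .
  then show ?case by simp
qed

lemma CX_funpow: fixes \<alpha> :: "'a::topological_space \<Rightarrow> 'a"
  assumes "f \<in> CX" "continuous_on UNIV \<alpha>" shows "(\<lambda>x. f ((\<alpha>^^n) x)) \<in> CX"
  by (rule CX_comp[OF assms(1) funpow_cont[OF assms(2)]])

lemma Sn_CX: fixes \<alpha> :: "'a::topological_space \<Rightarrow> 'a"
  assumes "\<phi> \<in> CX" "continuous_on UNIV \<alpha>" shows "Sn \<alpha> \<phi> n \<in> CX"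
  unfolding Sn_def by (rule CX_sum) (auto intro: CX_funpow[OF assms])

lemma Aphi_pow:
  assumes "transfer_op \<alpha> A" "continuous_on UNIV \<alpha>" "\<phi> \<in> CX"
  shows "f \<in> CX \<Longrightarrow> (A_phi A \<phi> ^^ n) f = (A^^n) (\<lambda>x. exp (Sn \<alpha> \<phi> n x) * f x)"
proof (induction n)
  case 0 then show ?case by (simp add: Sn_def)
next
  case (Suc n)
  have h: "(\<lambda>x. exp (Sn \<alpha> \<phi> n x) * f x) \<in> CX" using Suc.prems assms by (intro CX_mult CX_exp Sn_CX)
  have u: "(\<lambda>x. exp (\<phi> x)) \<in> CX" using assms(3) by (rule CX_exp)
  have "(A_phi A \<phi> ^^ Suc n) f = A_phi A \<phi> ((A_phi A \<phi> ^^ n) f)" by simp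
  also have "\<dots> = A (\<lambda>x. exp (\<phi> x) * (A^^n) (\<lambda>x. exp (Sn \<alpha> \<phi> n x) * f x) x)"
    unfolding Suc.IH[OF Suc.prems] A_phi_def ..
  also have "(\<lambda>x. exp (\<phi> x) * (A^^n) (\<lambda>x. exp (Sn \<alpha> \<phi> n x) * f x) x)
     = (A^^n) (\<lambda>y. exp (\<phi> ((\<alpha>^^n) y)) * (exp (Sn \<alpha> \<phi> n y) * f y))"
    using transfer_iter[OF assms(1,2) h u, of n] by simp
  also have "(\<lambda>y. exp (\<phi> ((\<alpha>^^n) y)) * (exp (Sn \<alpha> \<phi> n y) * f y)) = (\<lambda>y. exp (Sn \<alpha> \<phi> (Suc n) y) * f y)"
    by (simp add: Sn_def exp_add algebra_simps)
  finally show ?case by simp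
qed



lemma dedup:
  fixes g :: "'i \<Rightarrow> ('a::topological_space \<Rightarrow> real)"
  assumes "finite I" "\<forall>i\<in>I. g i \<in> CX" "\<forall>i\<in>I. \<forall>x. g i x \<ge> 0" "\<forall>x. (\<Sum>i\<in>I. g i x) = 1"
    "\<forall>i\<in>I. P (g i)" "\<forall>d. P d \<longrightarrow> P (\<lambda>x. 2 * d x)"
  shows "\<exists>D\<in>partitions_of_unity. \<forall>d\<in>D. P d"
  using assms(1-5)
proof (induction "card I" arbitrary: I g rule: less_induct)
  case less
  show ?case
  proof (cases "inj_on g I")
    case True
    have "\<forall>x. (\<Sum>d\<in>g`I. d x) = 1"
      using less.prems(4) sum.reindex[OF True, of "\<lambda>d. d x" for x] by simp
    then have "g ` I \<in> partitions_of_unity"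
      using less.prems(1-3) unfolding partitions_of_unity_def by auto
    then show ?thesis using less.prems(5) by blast
  next
    case False
    then obtain i j where ij: "i \<in> I" "j \<in> I" "i \<noteq> j" "g i = g j" unfolding inj_on_def by blast
    define I' where "I' = I - {j}"
    define g' where "g' = g(i := (\<lambda>x. 2 * g i x))"
    have fI': "finite I'" using less.prems(1) by (simp add: I'_def)
    have iI': "i \<in> I'" using ij by (simp add: I'_def)
    have card: "card I' < card I" unfolding I'_def by (rule card_Diff1_less[OF less.prems(1) ij(2)])
    have s: "(\<Sum>k\<in>I'. g' k x) = 1" for x
    proof -
      have "(\<Sum>k\<in>I'. g' k x) = g' i x + (\<Sum>k\<in>I'-{i}. g' k x)" by (rule sum.remove[OF fI' iI'])
      also have "(\<Sum>k\<in>I'-{i}. g' k x) = (\<Sum>k\<in>I'-{i}. g k x)" by (rule sum.cong) (auto simp: g'_def)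
      also have "g' i x = g i x + g j x" using ij by (simp add: g'_def)
      finally have 1: "(\<Sum>k\<in>I'. g' k x) = g j x + (g i x + (\<Sum>k\<in>I'-{i}. g k x))" by simp
      have "(\<Sum>k\<in>I. g k x) = g j x + (\<Sum>k\<in>I'. g k x)" unfolding I'_def by (rule sum.remove[OF less.prems(1) ij(2)])
      also have "(\<Sum>k\<in>I'. g k x) = g i x + (\<Sum>k\<in>I'-{i}. g k x)" by (rule sum.remove[OF fI' iI'])
      finally show ?thesis using 1 less.prems(4) by simp
    qed
    have "\<exists>D\<in>partitions_of_unity. \<forall>d\<in>D. P d"
    proof (rule less.hyps[OF card fI'])
      show "\<forall>k\<in>I'. g' k \<in> CX" using less.prems(2) iI' by (auto simp: g'_def I'_def intro: CX_cmult)
      show "\<forall>k\<in>I'. \<forall>x. g' k x \<ge> 0" using less.prems(3) by (auto simp: g'_def I'_def)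
      show "\<forall>x. (\<Sum>k\<in>I'. g' k x) = 1" using s by blast
      show "\<forall>k\<in>I'. P (g' k)" using less.prems(5) assms(6) by (auto simp: g'_def I'_def)
    qed
    then show ?thesis .
  qed
qed

lemma hat_partition:
  fixes S :: "'a::topological_space \<Rightarrow> real"
  assumes "compact (UNIV::'a set)" "S \<in> CX" "\<delta> > 0"
  shows "\<exists>D\<in>partitions_of_unity. \<forall>d\<in>D. \<exists>c. \<forall>x. 0 < d x \<longrightarrow> \<bar>S x - c\<bar> \<le> \<delta>"
proof -
  have cs: "continuous_on UNIV S" using assms(2) by (simp add: CX_def)
  have "compact (range (\<lambda>x. \<bar>S x\<bar>))"
    by (rule compact_continuous_image[OF _ assms(1)]) (intro continuous_intros cs)
  then have "bdd_above (range (\<lambda>x. \<bar>S x\<bar>))" by (intro bounded_imp_bdd_above compact_imp_bounded)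
  then obtain B where B: "\<And>x. \<bar>S x\<bar> \<le> B" unfolding bdd_above_def by auto
  define T where "T x = S x / \<delta>" for x
  define K where "K = \<lceil>B / \<delta>\<rceil>"
  have TK: "\<bar>T x\<bar> \<le> of_int K" for x
  proof -
    have "\<bar>T x\<bar> = \<bar>S x\<bar> / \<delta>" using assms(3) by (simp add: T_def abs_divide)
    also have "\<dots> \<le> B / \<delta>" using B[of x] assms(3) by (simp add: divide_right_mono)
    also have "\<dots> \<le> of_int K" unfolding K_def by (rule le_of_int_ceiling)
    finally show ?thesis .
  qed
  define I where "I = {-K-1..K+1}"
  define g where "g i x = max 0 (1 - \<bar>T x - of_int i\<bar>)" for i :: int and x
  have fin: "finite I" by (simp add: I_def)
  have gCX: "\<forall>i\<in>I. g i \<in> CX"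
    unfolding g_def T_def CX_def using assms(3) by (auto intro!: continuous_intros cs)
  have gnn: "\<forall>i\<in>I. \<forall>x. g i x \<ge> 0" by (simp add: g_def)
  have gsum: "\<forall>x. (\<Sum>i\<in>I. g i x) = 1"
  proof
    fix x
    define t where "t = T x"
    define k where "k = \<lfloor>t\<rfloor>"
    have kt: "of_int k \<le> t" "t < of_int k + 1" unfolding k_def by linarith+
    have tb: "\<bar>t\<bar> \<le> of_int K" using TK t_def by simp
    have kI: "{k, k+1} \<subseteq> I" unfolding I_def using kt tb by auto
    have "(\<Sum>i\<in>I. g i x) = (\<Sum>i\<in>{k,k+1}. g i x)"
    proof (rule sum.mono_neutral_right[OF fin kI], rule ballI)
      fix i assume "i \<in> I - {k, k+1}"
      then have "i \<le> k - 1 \<or> i \<ge> k + 2" by auto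
      then have "\<bar>t - of_int i\<bar> \<ge> 1"
      proof
        assume "i \<le> k - 1" then have "of_int i \<le> of_int k - (1::real)" by linarith
        then show ?thesis using kt by linarith
      next
        assume "i \<ge> k + 2" then have "of_int i \<ge> of_int k + (2::real)" by linarith
        then show ?thesis using kt by linarith
      qed
      then show "g i x = 0" unfolding g_def t_def by simp
    qed
    also have "\<dots> = g k x + g (k+1) x" by simp
    also have "\<dots> = 1" unfolding g_def t_def[symmetric] using kt by auto
    finally show "(\<Sum>i\<in>I. g i x) = 1" .
  qed
  have gP: "\<forall>i\<in>I. \<exists>c. \<forall>x. 0 < g i x \<longrightarrow> \<bar>S x - c\<bar> \<le> \<delta>"
  proof
    fix i assume "i \<in> I"
    show "\<exists>c. \<forall>x. 0 < g i x \<longrightarrow> \<bar>S x - c\<bar> \<le> \<delta>"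
    proof (intro exI allI impI)
      fix x assume "0 < g i x"
      then have "\<bar>T x - of_int i\<bar> < 1" by (simp add: g_def)
      moreover have "\<bar>S x - of_int i * \<delta>\<bar> = \<delta> * \<bar>T x - of_int i\<bar>"
        using assms(3) by (simp add: T_def field_simps abs_mult[symmetric])
      moreover have "\<delta> * \<bar>T x - of_int i\<bar> < \<delta> * 1"
        using calculation(1) assms(3) by (rule mult_strict_left_mono)
      ultimately show "\<bar>S x - of_int i * \<delta>\<bar> \<le> \<delta>" by linarith
    qed
  qed
  have clos: "\<forall>d::'a \<Rightarrow> real. (\<exists>c. \<forall>x. 0 < d x \<longrightarrow> \<bar>S x - c\<bar> \<le> \<delta>) \<longrightarrow>
       (\<exists>c. \<forall>x. 0 < (\<lambda>x. 2 * d x) x \<longrightarrow> \<bar>S x - c\<bar> \<le> \<delta>)" by (metis zero_less_mult_pos zero_less_numeral)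
  show ?thesis by (rule dedup[OF fin gCX gnn gsum gP clos])
qed



lemma inv_plf: "\<mu> \<in> inv_states \<alpha> \<Longrightarrow> plf \<mu>"
  by (simp add: inv_states_def states_plf)

lemma inv_iter:
  fixes \<alpha> :: "'a::topological_space \<Rightarrow> 'a"
  assumes "\<mu> \<in> inv_states \<alpha>" "continuous_on UNIV \<alpha>" "f \<in> CX"
  shows "\<mu> (\<lambda>x. f ((\<alpha>^^k) x)) = \<mu> f"
proof (induction k)
  case 0 then show ?case by simp
next
  case (Suc k)
  have e: "(\<lambda>x. f ((\<alpha>^^Suc k) x)) = (\<lambda>x. (\<lambda>y. f ((\<alpha>^^k) y)) (\<alpha> x))"
    by (simp add: funpow_Suc_right del: funpow.simps)
  have "\<forall>f\<in>CX. \<mu> (\<lambda>x. f (\<alpha> x)) = \<mu> f" using assms(1) unfolding inv_states_def by blast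
  from bspec[OF this CX_funpow[OF assms(3,2), of k]]
  have "\<mu> (\<lambda>x. f ((\<alpha>^^Suc k) x)) = \<mu> (\<lambda>y. f ((\<alpha>^^k) y))" unfolding e by simp
  then show ?case using Suc by simp
qed

lemma mu_Sn:
  fixes \<alpha> :: "'a::topological_space \<Rightarrow> 'a"
  assumes "\<mu> \<in> inv_states \<alpha>" "continuous_on UNIV \<alpha>" "\<phi> \<in> CX"
  shows "\<mu> (Sn \<alpha> \<phi> N) = real N * \<mu> \<phi>"
proof -
  have "\<mu> (Sn \<alpha> \<phi> N) = (\<Sum>k<N. \<mu> (\<lambda>x. \<phi> ((\<alpha>^^k) x)))"
    unfolding Sn_def by (rule plf_sum[OF inv_plf[OF assms(1)]]) (auto intro: CX_funpow[OF assms(3,2)])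
  also have "\<dots> = real N * \<mu> \<phi>" using inv_iter[OF assms] by simp
  finally show ?thesis .
qed

lemma ereal_sum_minf:
  fixes f :: "'i \<Rightarrow> ereal"
  assumes "finite D" "d \<in> D" "f d = -\<infinity>" "\<forall>e\<in>D. f e \<noteq> \<infinity>"
  shows "(\<Sum>e\<in>D. f e) = -\<infinity>"
proof -
  have "(\<Sum>e\<in>D. f e) = f d + (\<Sum>e\<in>D-{d}. f e)" by (rule sum.remove[OF assms(1,2)])
  moreover have "(\<Sum>e\<in>D-{d}. f e) \<noteq> \<infinity>" using assms(4) by (simp add: sum_Pinfty)
  ultimately show ?thesis using assms(3) by simp
qed

lemma lnE_neq_inf: "lnE x \<noteq> \<infinity>" by (simp add: lnE_def)

lemma core:
  fixes \<alpha> :: "'a::topological_space \<Rightarrow> 'a"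
  assumes cpt: "compact (UNIV :: 'a set)" and ac: "continuous_on UNIV \<alpha>"
    and tr: "transfer_op \<alpha> A" and ph: "\<phi> \<in> CX" and mu: "\<mu> \<in> inv_states \<alpha>"
    and dp: "\<delta> > 0" and D: "D \<in> partitions_of_unity"
    and Dp: "\<forall>d\<in>D. \<exists>c. \<forall>x. 0 < d x \<longrightarrow> \<bar>Sn \<alpha> \<phi> N x - c\<bar> \<le> \<delta>"
    and m: "m \<in> states"
  shows "ereal (real N * \<mu> \<phi>) + (\<Sum>g\<in>D. (if \<mu> g = 0 then 0 else ereal (\<mu> g) * lnE (m ((A ^^ N) g) / \<mu> g)))
     \<le> lnE (sup_norm ((A_phi A \<phi> ^^ N) one_fun)) + ereal (2*\<delta>)"
proof -
  define S where "S = Sn \<alpha> \<phi> N"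
  define B where "B = A ^^ N"
  define a where "a = sup_norm ((A_phi A \<phi> ^^ N) one_fun)"
  define w where "w d = \<mu> d" for d
  define v where "v d = m (B d)" for d
  define P where "P = {d\<in>D. \<mu> d \<noteq> 0}"
  have fD: "finite D" and DCX: "\<And>d. d \<in> D \<Longrightarrow> d \<in> CX" and Dnn: "\<And>d x. d \<in> D \<Longrightarrow> d x \<ge> 0"
    and Dsum: "\<And>x. (\<Sum>d\<in>D. d x) = 1" using D unfolding partitions_of_unity_def by auto
  have pmu: "plf \<mu>" by (rule inv_plf[OF mu])
  have pA: "pos_lin_op A" by (rule transfer_plo[OF tr])
  have pB: "pos_lin_op B" unfolding B_def by (rule plo_funpow[OF pA])
  have pm: "plf m" by (rule states_plf[OF m])
  have pmB: "plf (\<lambda>f. m (B f))" by (rule plo_comp_plf[OF pB pm])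
  have SCX: "S \<in> CX" unfolding S_def by (rule Sn_CX[OF ph ac])
  obtain c where c: "\<And>d x. d \<in> D \<Longrightarrow> 0 < d x \<Longrightarrow> \<bar>S x - c d\<bar> \<le> \<delta>"
    using Dp unfolding S_def by metis
  have wnn: "w d \<ge> 0" if "d \<in> D" for d unfolding w_def using that by (intro plf_pos[OF pmu DCX]) (auto intro: Dnn)
  have vnn: "v d \<ge> 0" if "d \<in> D" for d unfolding v_def using that by (intro plf_pos[OF pmB DCX]) (auto intro: Dnn)
  have one: "(\<lambda>x. \<Sum>d\<in>D. d x) = one_fun" using Dsum by (auto simp: one_fun_def)
  have wsum: "(\<Sum>d\<in>D. w d) = 1"
  proof -
    have "\<mu> (\<lambda>x. \<Sum>d\<in>D. d x) = (\<Sum>d\<in>D. \<mu> d)" by (rule plf_sum[OF pmu fD DCX])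
    then show ?thesis using mu unfolding one w_def inv_states_def states_def by simp
  qed
  have PD: "P \<subseteq> D" unfolding P_def by auto
  have fP: "finite P" using fD PD finite_subset by blast
  have sumP: "(\<Sum>d\<in>D. f d) = (\<Sum>d\<in>P. f d)" if "\<And>d. d \<in> D \<Longrightarrow> w d = 0 \<Longrightarrow> f d = 0" for f :: "_ \<Rightarrow> real"
    by (rule sum.mono_neutral_right[OF fD PD]) (use that in \<open>auto simp: P_def w_def\<close>)
  have wsumP: "(\<Sum>d\<in>P. w d) = 1" using wsum sumP[of w] by simp
  have wpos: "w d > 0" if "d \<in> P" for d using wnn[of d] that by (auto simp: P_def w_def)
  show ?thesis
  proof (cases "\<exists>d\<in>P. v d = 0")
    case True
    then obtain d where d: "d \<in> P" "v d = 0" by blast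
    have "(\<Sum>g\<in>D. (if \<mu> g = 0 then 0 else ereal (\<mu> g) * lnE (m ((A ^^ N) g) / \<mu> g))) = -\<infinity>"
    proof (rule ereal_sum_minf[OF fD])
      show "d \<in> D" using d PD by auto
      show "(if \<mu> d = 0 then 0 else ereal (\<mu> d) * lnE (m ((A ^^ N) d) / \<mu> d)) = -\<infinity>"
        using d wpos[OF d(1)] by (simp add: v_def B_def w_def lnE_def P_def)
      show "\<forall>e\<in>D. (if \<mu> e = 0 then 0 else ereal (\<mu> e) * lnE (m ((A ^^ N) e) / \<mu> e)) \<noteq> \<infinity>"
      proof
        fix e assume eD: "e \<in> D"
        have "\<mu> e \<ge> 0" using wnn[OF eD] by (simp add: w_def)
        then show "(if \<mu> e = 0 then 0 else ereal (\<mu> e) * lnE (m ((A ^^ N) e) / \<mu> e)) \<noteq> \<infinity>"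
          by (auto simp: lnE_def)
      qed
    qed
    then show ?thesis by simp
  next
    case False
    then have vpos: "v d > 0" if "d \<in> P" for d using vnn[of d] that PD by force
    define r where "r d = (if \<mu> d = 0 then 0 else \<mu> d * ln (v d / \<mu> d))" for d
    have terms: "(if \<mu> g = 0 then 0 else ereal (\<mu> g) * lnE (m ((A ^^ N) g) / \<mu> g)) = ereal (r g)"
      if "g \<in> D" for g
    proof (cases "\<mu> g = 0")
      case True then show ?thesis by (simp add: r_def)
    next
      case False
      then have "g \<in> P" using that by (simp add: P_def)
      then have "v g / \<mu> g > 0" using vpos wpos by (simp add: w_def)
      then show ?thesis using False by (simp add: r_def lnE_def v_def B_def)
    qed
    have sumr: "(\<Sum>g\<in>D. (if \<mu> g = 0 then 0 else ereal (\<mu> g) * lnE (m ((A ^^ N) g) / \<mu> g))) = ereal (\<Sum>g\<in>D. r g)"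
      using terms by simp
    define e where "e d = exp (c d - \<delta>)" for d
    define Bs where "Bs = (\<Sum>d\<in>P. e d * v d)"
    have Pne: "P \<noteq> {}" using wsumP by auto
    have Bspos: "Bs > 0" unfolding Bs_def using Pne fP vpos
      by (intro sum_pos) (auto simp: e_def)
    have expS: "(\<lambda>x. exp (S x) * one_fun x) = (\<lambda>x. \<Sum>d\<in>D. exp (S x) * d x)"
      using Dsum by (simp add: one_fun_def sum_distrib_left[symmetric])
    have eSd: "(\<lambda>x. exp (S x) * d x) \<in> CX" if "d \<in> D" for d using that SCX DCX by (intro CX_mult CX_exp) auto
    have "m ((A_phi A \<phi> ^^ N) one_fun) = m (B (\<lambda>x. exp (S x) * one_fun x))"
      unfolding Aphi_pow[OF tr ac ph CX_one] S_def B_def ..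
    also have "\<dots> = (\<Sum>d\<in>D. m (B (\<lambda>x. exp (S x) * d x)))"
      unfolding expS by (rule plf_sum[OF pmB fD eSd])
    also have "\<dots> \<ge> (\<Sum>d\<in>D. e d * v d)"
    proof (rule sum_mono)
      fix d assume dD: "d \<in> D"
      have "m (B (\<lambda>x. e d * d x)) \<le> m (B (\<lambda>x. exp (S x) * d x))"
      proof (rule plf_mono[OF pmB CX_cmult[OF DCX[OF dD]] eSd[OF dD]])
        fix x show "e d * d x \<le> exp (S x) * d x"
        proof (cases "d x > 0")
          case True
          then have "c d - \<delta> \<le> S x" using c[OF dD True] by linarith
          then show ?thesis unfolding e_def using True by (intro mult_right_mono) auto
        next
          case False then have "d x = 0" using Dnn[OF dD, of x] by linarith
          then show ?thesis by simp
        qed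
      qed
      then show "e d * v d \<le> m (B (\<lambda>x. exp (S x) * d x))"
        unfolding v_def using plf_cmult[OF pmB DCX[OF dD]] by simp
    qed
    finally have a1: "(\<Sum>d\<in>D. e d * v d) \<le> m ((A_phi A \<phi> ^^ N) one_fun)" .
    have "(\<Sum>d\<in>P. e d * v d) \<le> (\<Sum>d\<in>D. e d * v d)"
      by (rule sum_mono2[OF fD PD]) (simp add: e_def vnn)
    moreover have "m ((A_phi A \<phi> ^^ N) one_fun) \<le> a"
      unfolding a_def
      by (rule state_le_sup[OF cpt _ m]) (rule plo_CX[OF plo_funpow[OF Aphi_plo[OF pA ph]] CX_one])
    ultimately have Bsa: "Bs \<le> a" using a1 unfolding Bs_def by linarith
    then have apos: "a > 0" using Bspos by linarith
    have lnBa: "ln Bs \<le> ln a" using Bsa Bspos by simp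
    have conc: "(\<Sum>d\<in>P. w d * ln (e d * v d / w d)) \<le> ln Bs"
    proof -
      have "w d * (ln (e d * v d / w d) - ln Bs) \<le> e d * v d / Bs - w d" if "d \<in> P" for d
      proof -
        have pos: "e d * v d / (w d * Bs) > 0" using vpos[OF that] wpos[OF that] Bspos by (simp add: e_def)
        have "ln (e d * v d / w d) - ln Bs = ln (e d * v d / (w d * Bs))"
          using vpos[OF that] wpos[OF that] Bspos by (simp add: e_def ln_div ln_mult)
        also have "\<dots> \<le> e d * v d / (w d * Bs) - 1" by (rule ln_le_minus_one[OF pos])
        finally have "w d * (ln (e d * v d / w d) - ln Bs) \<le> w d * (e d * v d / (w d * Bs) - 1)"
          using wpos[OF that] by (simp add: mult_left_mono)
        also have "\<dots> = e d * v d / Bs - w d" using wpos[OF that] by (simp add: field_simps)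
        finally show ?thesis .
      qed
      then have "(\<Sum>d\<in>P. w d * (ln (e d * v d / w d) - ln Bs)) \<le> (\<Sum>d\<in>P. e d * v d / Bs - w d)"
        by (rule sum_mono)
      also have "\<dots> = 0" using wsumP Bspos by (simp add: sum_subtractf Bs_def sum_divide_distrib[symmetric])
      finally show ?thesis using wsumP by (simp add: sum_subtractf right_diff_distrib sum_distrib_left[symmetric] sum_distrib_right[symmetric])
    qed
    have split: "w d * ln (e d * v d / w d) = w d * (c d - \<delta>) + r d" if "d \<in> P" for d
    proof -
      have "ln (e d * v d / w d) = (c d - \<delta>) + ln (v d / w d)"
        using vpos[OF that] wpos[OF that] by (simp add: e_def ln_mult ln_div)
      then show ?thesis using wpos[OF that] by (simp add: r_def w_def distrib_left)
    qed
    have sumrP: "(\<Sum>g\<in>D. r g) = (\<Sum>g\<in>P. r g)" by (rule sumP) (simp add: r_def w_def)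
    have SdCX: "(\<lambda>x. S x * d x) \<in> CX" if "d \<in> D" for d using that SCX DCX by (intro CX_mult) auto
    have "real N * \<mu> \<phi> = \<mu> S" unfolding S_def by (rule mu_Sn[OF mu ac ph, symmetric])
    also have "S = (\<lambda>x. \<Sum>d\<in>D. S x * d x)" using Dsum by (simp add: sum_distrib_left[symmetric])
    also have "\<mu> \<dots> = (\<Sum>d\<in>D. \<mu> (\<lambda>x. S x * d x))" by (rule plf_sum[OF pmu fD SdCX])
    also have "\<dots> \<le> (\<Sum>d\<in>D. (c d + \<delta>) * w d)"
    proof (rule sum_mono)
      fix d assume dD: "d \<in> D"
      have "\<mu> (\<lambda>x. S x * d x) \<le> \<mu> (\<lambda>x. (c d + \<delta>) * d x)"
      proof (rule plf_mono[OF pmu SdCX[OF dD] CX_cmult[OF DCX[OF dD]]])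
        fix x show "S x * d x \<le> (c d + \<delta>) * d x"
        proof (cases "d x > 0")
          case True
          then have "S x \<le> c d + \<delta>" using c[OF dD True] by linarith
          then show ?thesis using True by (intro mult_right_mono) auto
        next
          case False then have "d x = 0" using Dnn[OF dD, of x] by linarith
          then show ?thesis by simp
        qed
      qed
      then show "\<mu> (\<lambda>x. S x * d x) \<le> (c d + \<delta>) * w d"
        unfolding w_def using plf_cmult[OF pmu DCX[OF dD]] by simp
    qed
    also have "\<dots> = (\<Sum>d\<in>P. (c d + \<delta>) * w d)" by (rule sumP) simp
    also have "\<dots> = (\<Sum>d\<in>P. w d * (c d - \<delta>) + 2 * \<delta> * w d)"
      by (rule sum.cong) (simp_all add: algebra_simps)
    also have "\<dots> = (\<Sum>d\<in>P. w d * (c d - \<delta>)) + 2 * \<delta> * (\<Sum>d\<in>P. w d)"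
      by (simp add: sum.distrib sum_distrib_left)
    finally have Nb: "real N * \<mu> \<phi> \<le> (\<Sum>d\<in>P. w d * (c d - \<delta>)) + 2 * \<delta>" using wsumP by simp
    have "(\<Sum>d\<in>P. w d * ln (e d * v d / w d)) = (\<Sum>d\<in>P. w d * (c d - \<delta>)) + (\<Sum>d\<in>P. r d)"
      using split by (simp add: sum.distrib[symmetric])
    then have real_ineq: "real N * \<mu> \<phi> + (\<Sum>g\<in>D. r g) \<le> ln a + 2 * \<delta>"
      using Nb conc lnBa sumrP by linarith
    have "lnE a = ereal (ln a)" using apos by (simp add: lnE_def)
    then show ?thesis using real_ineq unfolding sumr a_def[symmetric] by simp
  qed
qed



lemma subadd_iter:
  fixes r :: "nat \<Rightarrow> real"
  assumes sub: "\<And>n m. r (n + m) \<le> r n + r m"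
  shows "r (q * k + s) \<le> real q * r k + r s"
proof (induction q)
  case 0 then show ?case by simp
next
  case (Suc q)
  have "r (Suc q * k + s) = r (k + (q * k + s))" by (simp add: add.assoc)
  also have "\<dots> \<le> r k + r (q * k + s)" by (rule sub)
  finally show ?case using Suc by (simp add: algebra_simps)
qed

lemma subadd_bound:
  fixes r :: "nat \<Rightarrow> real"
  assumes sub: "\<And>n m. r (n + m) \<le> r n + r m" and k: "k \<ge> 1" and n: "n \<ge> 1"
  shows "r n / real n \<le> r k / real k + (\<bar>r k\<bar> + (\<Sum>s<k. \<bar>r s\<bar>)) / real n"
proof -
  define q where "q = n div k"
  define s where "s = n mod k"
  have ns: "n = q * k + s" unfolding q_def s_def by simp
  have sk: "s < k" unfolding s_def using k by simp
  have kpos: "real k > 0" using k by simp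
  have "r n \<le> real q * r k + r s" unfolding ns by (rule subadd_iter[OF sub])
  also have "real q * r k = real n * r k / real k - real s * r k / real k"
    using kpos by (simp add: ns field_simps)
  also have "- (real s * r k / real k) \<le> \<bar>r k\<bar>"
  proof -
    have "\<bar>real s * r k / real k\<bar> = real s / real k * \<bar>r k\<bar>" using kpos by (simp add: abs_mult)
    also have "\<dots> \<le> 1 * \<bar>r k\<bar>" using sk kpos by (intro mult_right_mono) auto
    finally show ?thesis by linarith
  qed
  moreover have "r s \<le> (\<Sum>s<k. \<bar>r s\<bar>)"
  proof -
    have "r s \<le> \<bar>r s\<bar>" by simp
    also have "\<dots> \<le> (\<Sum>s<k. \<bar>r s\<bar>)" by (rule member_le_sum) (use sk in auto)
    finally show ?thesis .
  qed
  ultimately have "r n \<le> real n * r k / real k + (\<bar>r k\<bar> + (\<Sum>s<k. \<bar>r s\<bar>))" by linarith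
  then show ?thesis using n by (simp add: field_simps)
qed

lemma fekete:
  fixes r :: "nat \<Rightarrow> real"
  assumes sub: "\<And>n m. r (n + m) \<le> r n + r m"
  shows "(\<lambda>n. ereal (r n / real n)) \<longlonglongrightarrow> (INF k\<in>{1..}. ereal (r k / real k))"
proof -
  define L where "L = (INF k\<in>{1..}. ereal (r k / real k))"
  define y where "y n = ereal (r n / real n)" for n
  have liminf: "L \<le> Liminf sequentially y"
    by (rule Liminf_bounded) (auto simp: eventually_sequentially L_def y_def intro!: exI[of _ 1] INF_lower)
  have limsup: "Limsup sequentially y \<le> L"
    unfolding L_def
  proof (rule INF_greatest)
    fix k :: nat assume "k \<in> {1..}"
    then have k: "k \<ge> 1" by simp
    define C where "C = \<bar>r k\<bar> + (\<Sum>s<k. \<bar>r s\<bar>)"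
    have C0: "C \<ge> 0" unfolding C_def by (simp add: sum_nonneg)
    show "Limsup sequentially y \<le> ereal (r k / real k)"
    proof (rule ereal_le_epsilon2)
      fix \<epsilon> :: real assume e: "0 < \<epsilon>"
      define N0 where "N0 = nat \<lceil>C / \<epsilon>\<rceil> + 1"
      have "eventually (\<lambda>n. y n \<le> ereal (r k / real k) + ereal \<epsilon>) sequentially"
        unfolding eventually_sequentially
      proof (intro exI allI impI)
        fix n assume nN: "N0 \<le> n"
        then have n1: "n \<ge> 1" unfolding N0_def by simp
        have "C / \<epsilon> < real n" using nN unfolding N0_def by linarith
        then have "C < real n * \<epsilon>" using e by (simp add: field_simps)
        then have Cn: "C / real n \<le> \<epsilon>" using n1 by (simp add: field_simps)
        have "r n / real n \<le> r k / real k + C / real n" unfolding C_def by (rule subadd_bound[OF sub k n1])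
        then show "y n \<le> ereal (r k / real k) + ereal \<epsilon>" using Cn by (simp add: y_def)
      qed
      then show "Limsup sequentially y \<le> ereal (r k / real k) + ereal \<epsilon>" by (rule Limsup_bounded)
    qed
  qed
  have "Liminf sequentially y \<le> Limsup sequentially y" by (rule Liminf_le_Limsup) simp
  then have "Liminf sequentially y = L" "Limsup sequentially y = L" using liminf limsup by auto
  then have "y \<longlonglongrightarrow> L" by (intro Liminf_eq_Limsup) auto
  then show ?thesis unfolding y_def L_def .
qed



lemma ereal_shift1: "ereal x + y \<le> z + ereal e \<Longrightarrow> y \<le> z + ereal (e - x)"
  by (cases y; cases z) auto

lemma ereal_shift2: "y \<le> z + ereal (e - x) \<Longrightarrow> ereal x + y \<le> z + ereal e"
  by (cases y; cases z) auto

lemma tau_n_bound: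
  fixes \<alpha> :: "'a::topological_space \<Rightarrow> 'a"
  assumes cpt: "compact (UNIV :: 'a set)" and ac: "continuous_on UNIV \<alpha>"
    and tr: "transfer_op \<alpha> A" and ph: "\<phi> \<in> CX" and mu: "\<mu> \<in> inv_states \<alpha>"
  shows "ereal (real N * \<mu> \<phi>) + tau_n A N \<mu> \<le> lnE (sup_norm ((A_phi A \<phi> ^^ N) one_fun))"
proof (rule ereal_le_epsilon2)
  fix e :: real assume e: "0 < e"
  define \<delta> where "\<delta> = e / 2"
  have dp: "\<delta> > 0" using e by (simp add: \<delta>_def)
  obtain D where D: "D \<in> partitions_of_unity"
    and Dp: "\<forall>d\<in>D. \<exists>c. \<forall>x. 0 < d x \<longrightarrow> \<bar>Sn \<alpha> \<phi> N x - c\<bar> \<le> \<delta>"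
    using hat_partition[OF cpt Sn_CX[OF ph ac] dp] by blast
  define L where "L = lnE (sup_norm ((A_phi A \<phi> ^^ N) one_fun))"
  have "tau_nD A N \<mu> D \<le> L + ereal (e - real N * \<mu> \<phi>)"
    unfolding tau_nD_def
  proof (rule SUP_least)
    fix m :: "('a \<Rightarrow> real) \<Rightarrow> real" assume m: "m \<in> states"
    have "ereal (real N * \<mu> \<phi>) + (\<Sum>g\<in>D. (if \<mu> g = 0 then 0 else ereal (\<mu> g) * lnE (m ((A ^^ N) g) / \<mu> g)))
       \<le> L + ereal (2*\<delta>)" unfolding L_def by (rule core[OF cpt ac tr ph mu dp D Dp m])
    then show "(\<Sum>g\<in>D. (if \<mu> g = 0 then 0 else ereal (\<mu> g) * lnE (m ((A ^^ N) g) / \<mu> g)))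
       \<le> L + ereal (e - real N * \<mu> \<phi>)"
      using e by (intro ereal_shift1) (simp add: \<delta>_def)
  qed
  moreover have "tau_n A N \<mu> \<le> tau_nD A N \<mu> D" unfolding tau_n_def by (rule INF_lower[OF D])
  ultimately have "tau_n A N \<mu> \<le> L + ereal (e - real N * \<mu> \<phi>)" by (rule order_trans[rotated])
  then show "ereal (real N * \<mu> \<phi>) + tau_n A N \<mu> \<le> lnE (sup_norm ((A_phi A \<phi> ^^ N) one_fun)) + ereal e"
    unfolding L_def by (rule ereal_shift2)
qed

lemma div_step:
  fixes t :: ereal and a :: real
  assumes "ereal (real N * u) + t \<le> lnE a" "N \<ge> 1" "a \<ge> 0"
  shows "ereal u + t / ereal (real N) \<le> lnE a / ereal (real N)"
proof (cases "a > 0")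
  case True
  then have la: "lnE a = ereal (ln a)" by (simp add: lnE_def)
  show ?thesis
  proof (cases t)
    case (real t')
    then have "real N * u + t' \<le> ln a" using assms(1) la by simp
    moreover have Np: "real N > 0" using assms(2) by simp
    ultimately have "(real N * u + t') / real N \<le> ln a / real N" by (intro divide_right_mono) auto
    moreover have "u + t' / real N = (real N * u + t') / real N" using Np by (simp add: field_simps)
    ultimately have "u + t' / real N \<le> ln a / real N" by simp
    then show ?thesis using real la assms(2) by simp
  next
    case PInf then show ?thesis using assms(1) la by simp
  next
    case MInf then show ?thesis using assms(2) by simp
  qed
next
  case False
  then have la: "lnE a = -\<infinity>" by (simp add: lnE_def)
  then have "t = -\<infinity>" using assms(1) by (cases t) auto
  then show ?thesis using assms(2) by simp
qed



theorem lemma1p11: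
  fixes \<alpha> :: "'a::t2_space \<Rightarrow> 'a"
    and A :: "('a \<Rightarrow> real) \<Rightarrow> ('a \<Rightarrow> real)"
    and \<phi> :: "'a \<Rightarrow> real"
    and \<mu> :: "('a \<Rightarrow> real) \<Rightarrow> real"
  assumes "compact (UNIV :: 'a set)"
    and "continuous_on UNIV \<alpha>"
    and "transfer_op \<alpha> A"
    and "\<phi> \<in> CX"
    and "\<mu> \<in> inv_states \<alpha>"
  shows "press A \<phi> \<ge> ereal (\<mu> \<phi>) + tau A \<mu>"
proof -
  note cpt = assms(1) and ac = assms(2) and tr = assms(3) and ph = assms(4) and mu = assms(5)
  define F where "F n = (A_phi A \<phi> ^^ n) one_fun" for n
  define a where "a n = sup_norm (F n)" for n
  have pA: "pos_lin_op A" by (rule transfer_plo[OF tr])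
  have pP: "pos_lin_op (A_phi A \<phi>)" by (rule Aphi_plo[OF pA ph])
  have pPn: "pos_lin_op (A_phi A \<phi> ^^ n)" for n by (rule plo_funpow[OF pP])
  have FCX: "F n \<in> CX" for n unfolding F_def by (rule plo_CX[OF pPn CX_one])
  have Fnn: "F n x \<ge> 0" for n x unfolding F_def by (rule plo_pos[OF pPn CX_one]) (simp add: one_fun_def)
  have anz: "a n \<ge> 0" for n unfolding a_def by (rule sup_norm_nonneg[OF cpt FCX])
  have Fle: "F n x \<le> a n" for n x unfolding a_def by (rule sup_norm_ge'[OF cpt FCX])
  have a0: "a 0 = 1" unfolding a_def F_def sup_norm_def by (simp add: one_fun_def)
  have asub: "a (n + m) \<le> a n * a m" for n m
  proof -
    have "F (n + m) x \<le> a m * a n" for x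
    proof -
      have "F (n + m) = (A_phi A \<phi> ^^ n) (F m)" unfolding F_def by (simp add: funpow_add)
      moreover have "(A_phi A \<phi> ^^ n) (F m) x \<le> (A_phi A \<phi> ^^ n) (\<lambda>x. a m * one_fun x) x"
        by (rule plo_mono[OF pPn FCX CX_cmult[OF CX_one]]) (simp add: one_fun_def Fle)
      moreover have "(A_phi A \<phi> ^^ n) (\<lambda>x. a m * one_fun x) x = a m * F n x"
        unfolding F_def by (simp add: plo_cmult[OF pPn CX_one])
      moreover have "a m * F n x \<le> a m * a n" by (rule mult_left_mono[OF Fle anz])
      ultimately show ?thesis by simp
    qed
    then have "a (n + m) \<le> a m * a n" unfolding a_def[of "n+m"]
      by (intro sup_norm_le) (simp add: abs_of_nonneg Fnn)
    then show ?thesis by (simp add: mult.commute)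
  qed
  define c0 where "c0 = ereal (\<mu> \<phi>) + tau A \<mu>"
  define x where "x n = lnE (a n) / ereal (real n)" for n
  have bound: "c0 \<le> x N" if N: "N \<ge> 1" for N
  proof -
    have "tau A \<mu> \<le> tau_n A N \<mu> / ereal (real N)" unfolding tau_def using N by (intro INF_lower) simp
    then have "c0 \<le> ereal (\<mu> \<phi>) + tau_n A N \<mu> / ereal (real N)" unfolding c0_def by (rule add_left_mono)
    also have "\<dots> \<le> x N" unfolding x_def
      by (rule div_step[OF _ N anz]) (unfold a_def F_def, rule tau_n_bound[OF cpt ac tr ph mu])
    finally show ?thesis .
  qed
  have pr: "press A \<phi> = lim x" unfolding press_def x_def a_def F_def ..
  show ?thesis
  proof (cases "\<exists>N\<ge>1. a N = 0")
    case True
    then obtain N where N: "N \<ge> 1" "a N = 0" by blast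
    have "x N = -\<infinity>" unfolding x_def using N by (simp add: lnE_def)
    then have "c0 = -\<infinity>" using bound[OF N(1)] by simp
    then show ?thesis unfolding c0_def[symmetric] by simp
  next
    case False
    have apos: "a n > 0" for n
    proof (cases "n = 0")
      case True then show ?thesis using a0 by simp
    next
      case nz: False
      then have "a n \<noteq> 0" using False by (metis less_one not_le)
      then show ?thesis using anz[of n] by linarith
    qed
    define r where "r n = ln (a n)" for n
    have rsub: "r (n + m) \<le> r n + r m" for n m
    proof -
      have "ln (a (n + m)) \<le> ln (a n * a m)" using asub[of n m] apos by simp
      moreover have "ln (a n * a m) = ln (a n) + ln (a m)" using apos[of n] apos[of m] by (simp add: ln_mult_pos)
      ultimately show ?thesis unfolding r_def by simp
    qed
    obtain L where L: "(\<lambda>n. ereal (r n / real n)) \<longlonglongrightarrow> L" using fekete[OF rsub] by blast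
    have ev: "eventually (\<lambda>n. ereal (r n / real n) = x n) sequentially"
      unfolding eventually_sequentially
    proof (intro exI allI impI)
      fix n :: nat assume "1 \<le> n"
      then show "ereal (r n / real n) = x n" using apos[of n] by (simp add: x_def r_def lnE_def)
    qed
    have xL: "x \<longlonglongrightarrow> L" by (rule Lim_transform_eventually[OF L ev])
    have "c0 \<le> L" by (rule Lim_bounded2[OF xL]) (use bound in auto)
    then show ?thesis unfolding pr limI[OF xL] c0_def .
  qed
qed

end
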